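(* Let $\sigma\in\,]-\tfrac52,\tfrac32[$, $\sigma\ne-\tfrac12$. Then, with two-sided constants independent of $(\lambda,\zeta)\in\mathbb{S}\times(\mathbb{Z}^2\setminus\{0\})$: - if $\sigma>-\tfrac12$: $M_\sigma(\lambda,\zeta)\sim\dfrac{\langle\zeta\rangle^{-\sigma}}{\langle\omega\rangle^2}$; - if $\sigma<-\tfrac12$: $M_\sigma(\lambda,\zeta)\sim\dfrac{\langle\zeta\rangle^{-\sigma}}{\langle\omega\rangle^2}\mathbf{1}_{\langle\zeta\rangle\ge\langle\omega\rangle^\kappa}+\dfrac{\langle\omega\rangle^{-\sigma}}{\langle\omega\rangle^{5/2}}\mathbf{1}_{\langle\zeta\rangle\le\langle\omega\rangle^\kappa}$, where $\kappa=\dfrac{2\sigma+1}{2\sigma}$.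
   Context: Fix $a>0$, $\nu>0$, $\alpha\in\mathbb{R}$, $\beta,\gamma>0$, $\Omega=\mathbb{T}^2\times(0,a)$, $\mathbb{T}^2=(\mathbb{R}/2\pi\mathbb{Z})^2$. Let $\mathcal{V}=\mathcal{V}_1\times\mathcal{V}_2$, where $\mathcal{V}_1$ is the closure in $H^1(\Omega)^2$ of smooth $(u,v)$ periodic in $x,y$, vanishing at $z=0,a$, with $\int_0^a(\partial_xu+\partial_yv)dz=0$, and $\mathcal{V}_2$ the closure in $H^1(\Omega)$ of smooth $\theta$ periodic in $x,y$ vanishing at $z=0,a$. For $X=(u,v,\theta),X'=(u',v',\theta')\in\mathcal{V}$ put $(X,X')_{\mathcal{H}}=\int_\Omega(u\bar u'+v\bar v'+\frac\beta\gamma\theta\bar\theta')$, $(X,X')_{\mathcal{V}}=\int_\Omega(\nabla u\cdot\nabla\bar u'+\nabla v\cdot\nabla\bar v'+\frac\beta\gamma\nabla\theta\cdot\nabla\bar\theta')$, $w=-\int_0^z(\partial_xu+\partial_yv)$, $w'=-\int_0^z(\partial_xu'+\partial_yv')$, $B(X,X')=-\int_\Omega\theta\bar w'+\int_\Omega w\bar\theta'$, $C(X,X')=-\int_\Omega v\bar u'+\int_\Omega u\bar v'$, $\langle PX,X'\rangle=\nu(X,X')_{\mathcal{V}}+\beta B(X,X')+\alpha C(X,X')$, and $\mathbb{V}_P=\{\lambda\in\mathbb{C}:\exists X\in\mathcal{V}\setminus\{0\},\ \lambda(X,X')_{\mathcal{H}}+\langle PX,X'\rangle=0\ \forall X'\in\mathcal{V}\}$.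 Let $\mathbb{S}=\{-\delta_2-\mu_1+i\mu_2:(\mu_1,\mu_2)\in\mathbb{R}^2,\ |\mu_2|\ge\mu_1/\delta_1\}$, where $\delta_1>0$ is small enough that $\mathbb{S}\cap\mathbb{V}_P=\emptyset$ and $\delta_2<\min(\frac{\nu\pi^2}{2a^2},\frac\nu2)$. For $\lambda\in\mathbb{S}$, $\zeta\in\mathbb{Z}^2$: $\langle\zeta\rangle=1+|\zeta|$, $\langle\omega\rangle^2=|\lambda|+\langle\zeta\rangle^2$, and $M_\sigma(\lambda,\zeta)=\big(\sum_{k\ge1}\frac{1}{k^2(k^4+\langle\omega\rangle^4)(k^2+\langle\zeta\rangle^2)^\sigma}\big)^{1/2}$ (finite for $\sigma>-\frac52$). $A\sim B$ means there are constants $C_1,C_2>0$ with $C_1B(\lambda,\zeta)\le A(\lambda,\zeta)\le C_2B(\lambda,\zeta)$ for all $(\lambda,\zeta)\in\mathbb{S}\times(\mathbb{Z}^2\setminus\{0\})$. *)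

theory Defs
  imports "HOL-Analysis.Analysis"
begin

definition sectorS :: "real \<Rightarrow> real \<Rightarrow> complex set" where
  "sectorS \<delta>1 \<delta>2 = {Complex (- \<delta>2 - \<mu>1) \<mu>2 | \<mu>1 \<mu>2. \<bar>\<mu>2\<bar> \<ge> \<mu>1 / \<delta>1}"

definition jzeta :: "int \<times> int \<Rightarrow> real" where
  "jzeta \<zeta> = 1 + sqrt (real_of_int (fst \<zeta>)^2 + real_of_int (snd \<zeta>)^2)"

definition jomega :: "complex \<Rightarrow> int \<times> int \<Rightarrow> real" where
  "jomega l \<zeta> = sqrt (cmod l + (jzeta \<zeta>)^2)"

definition Msig :: "real \<Rightarrow> complex \<Rightarrow> int \<times> int \<Rightarrow> real" where
  "Msig \<sigma> l \<zeta> = sqrt (\<Sum>n. 1 / (real (Suc n)^2 * (real (Suc n)^4 + (jomega l \<zeta>)^4)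
        * (real (Suc n)^2 + (jzeta \<zeta>)^2) powr \<sigma>))"

definition comparable_on ::
  "complex set \<Rightarrow> (complex \<Rightarrow> int \<times> int \<Rightarrow> real) \<Rightarrow> (complex \<Rightarrow> int \<times> int \<Rightarrow> real) \<Rightarrow> bool" where
  "comparable_on S A B \<longleftrightarrow> (\<exists>C1 C2. C1 > 0 \<and> C2 > 0 \<and>
     (\<forall>l\<in>S. \<forall>\<zeta>. \<zeta> \<noteq> (0,0) \<longrightarrow> C1 * B l \<zeta> \<le> A l \<zeta> \<and> A l \<zeta> \<le> C2 * B l \<zeta>))"

end

theory Submission
  imports Defs
begin


lemma tan_concave:
  fixes q :: real and n :: nat
  assumes q0: "0 < q" and q1: "q < 1"
  shows "real n powr q \<le> real (Suc n) powr q - q * real (Suc n) powr (q - 1)"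
proof (cases "n = 0")
  case True thus ?thesis using q1 by simp
next
  case False
  hence np: "real n > 0" by simp
  have "\<exists>z. real n < z \<and> z < real (Suc n) \<and>
     real (Suc n) powr q - real n powr q = (real (Suc n) - real n) * (q * z powr (q - 1))"
    by (rule MVT2) (use np in \<open>auto intro!: has_real_derivative_powr\<close>)
  then obtain z where z: "real n < z" "z < real (Suc n)"
    "real (Suc n) powr q - real n powr q = q * z powr (q - 1)" by auto
  have "real (Suc n) powr (q - 1) \<le> z powr (q - 1)"
    by (rule powr_mono2') (use z np q1 in auto)
  with z(3) q0 have "q * real (Suc n) powr (q - 1) \<le> real (Suc n) powr q - real n powr q"
    by (simp add: mult_left_mono)
  thus ?thesis by simp
qed

lemma tan_convex:
  fixes p :: real and n :: nat
  assumes p0: "0 < p" and n1: "n \<ge> 1"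
  shows "real (Suc n) powr (-p) + p * real (Suc n) powr (-p - 1) \<le> real n powr (-p)"
proof -
  have np: "real n > 0" using n1 by simp
  have "\<exists>z. real n < z \<and> z < real (Suc n) \<and>
     real (Suc n) powr (-p) - real n powr (-p) = (real (Suc n) - real n) * (-p * z powr (-p - 1))"
    by (rule MVT2) (use np in \<open>auto intro!: derivative_eq_intros simp: powr_diff powr_minus field_simps\<close>)
  then obtain z where z: "real n < z" "z < real (Suc n)"
    "real (Suc n) powr (-p) - real n powr (-p) = -p * z powr (-p - 1)" by auto
  have "real (Suc n) powr (-p-1) \<le> z powr (-p-1)"
    by (rule powr_mono2') (use z np p0 in auto)
  hence "p * real (Suc n) powr (-p-1) \<le> p * z powr (-p-1)"
    using p0 by (intro mult_left_mono) auto
  with z(3) show ?thesis by linarith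
qed

lemma finite_powr_sum:
  fixes a :: real
  assumes "-1 < a"
  shows "\<exists>C>0. \<forall>N::nat. N \<ge> 1 \<longrightarrow> (\<Sum>n<N. real (Suc n) powr a) \<le> C * real N powr (a + 1)"
proof (cases "a < 0")
  case True
  define q where "q = a + 1"
  have q0: "0 < q" "q < 1" using assms True by (auto simp: q_def)
  show ?thesis
  proof (intro exI[of _ "1/q"] conjI allI impI)
    show "1/q > 0" using q0 by simp
    fix N :: nat assume "N \<ge> 1"
    have "(\<Sum>n<N. real (Suc n) powr a) \<le> (\<Sum>n<N. (real (Suc n) powr q - real n powr q) / q)"
    proof (rule sum_mono)
      fix n assume "n \<in> {..<N}"
      have "q * real (Suc n) powr a \<le> real (Suc n) powr q - real n powr q"
        using tan_concave[OF q0, of n] by (simp add: q_def)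
      thus "real (Suc n) powr a \<le> (real (Suc n) powr q - real n powr q) / q"
        using q0 by (simp add: field_simps)
    qed
    also have "\<dots> = (\<Sum>n<N. real (Suc n) powr q - real n powr q) / q"
      by (simp add: sum_divide_distrib)
    also have "(\<Sum>n<N. real (Suc n) powr q - real n powr q) = real N powr q"
      using sum_lessThan_telescope[of "\<lambda>n. real n powr q" N] q0 by simp
    finally show "(\<Sum>n<N. real (Suc n) powr a) \<le> 1/q * real N powr (a + 1)"
      by (simp add: q_def)
  qed
next
  case False
  show ?thesis
  proof (intro exI[of _ 1] conjI allI impI)
    fix N :: nat assume N: "N \<ge> 1"
    have "(\<Sum>n<N. real (Suc n) powr a) \<le> (\<Sum>n<N. real N powr a)"
      by (rule sum_mono) (use False in \<open>auto intro!: powr_mono2\<close>)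
    also have "\<dots> = real N * real N powr a" by simp
    also have "\<dots> = real N powr (a + 1)" using N by (simp add: powr_add)
    finally show "(\<Sum>n<N. real (Suc n) powr a) \<le> 1 * real N powr (a + 1)" by simp
  qed simp
qed

lemma tail_powr_sum:
  fixes p :: real and N :: nat
  assumes p0: "0 < p" and N: "N \<ge> 1"
  shows "summable (\<lambda>n. real (Suc (n + N)) powr (-p - 1))"
    "(\<Sum>n. real (Suc (n + N)) powr (-p - 1)) \<le> real N powr (-p) / p"
proof -
  define F where "F n = real (n + N) powr (-p) / p" for n
  have lim: "F \<longlonglongrightarrow> 0"
    unfolding F_def using p0
    by (intro tendsto_divide_zero tendsto_neg_powr) (auto simp: add.commute[of _ "real N"] intro!: filterlim_tendsto_add_at_top[OF tendsto_const filterlim_real_sequentially])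
  have s: "(\<lambda>n. F n - F (Suc n)) sums (F 0 - 0)" by (rule telescope_sums'[OF lim])
  have le: "real (Suc (n + N)) powr (-p - 1) \<le> F n - F (Suc n)" for n
  proof -
    have "real (Suc (n+N)) powr (-p) + p * real (Suc (n+N)) powr (-p - 1) \<le> real (n+N) powr (-p)"
      using tan_convex[OF p0, of "n+N"] N by simp
    thus ?thesis using p0 unfolding F_def by (simp add: field_simps)
  qed
  show sm: "summable (\<lambda>n. real (Suc (n + N)) powr (-p - 1))"
    by (rule summable_comparison_test'[OF sums_summable[OF s]]) (use le in auto)
  have "(\<Sum>n. real (Suc (n + N)) powr (-p - 1)) \<le> (\<Sum>n. F n - F (Suc n))"
    by (rule suminf_le[OF le sm sums_summable[OF s]])
  also have "\<dots> = F 0" using s sums_unique by fastforce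
  finally show "(\<Sum>n. real (Suc (n + N)) powr (-p - 1)) \<le> real N powr (-p) / p"
    by (simp add: F_def)
qed



lemma sq_powr: "0 < (x::real) \<Longrightarrow> (x^2) powr a = x powr (2*a)"
  by (simp add: powr_powr[symmetric] powr_realpow[of x 2, simplified])

lemma pow_powr: "0 < (x::real) \<Longrightarrow> x ^ n = x powr (real n)"
  by (simp add: powr_realpow)

lemma TB1:
  fixes k W Z \<sigma> :: real
  assumes k: "1 \<le> k" and Z: "0 < Z" and W: "0 < W" and s: "0 \<le> \<sigma>"
  shows "1 / (k^2 * (k^4 + W^4) * (k^2 + Z^2) powr \<sigma>)
     \<le> (Z powr (-2*\<sigma>) * W powr (-4)) * k powr (-2)"
proof -
  have "(Z^2) powr \<sigma> \<le> (k^2 + Z^2) powr \<sigma>" by (rule powr_mono2) (use s in auto)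
  hence A: "k^2 * W^4 * (Z^2) powr \<sigma> \<le> k^2 * (k^4 + W^4) * (k^2 + Z^2) powr \<sigma>"
    using k W by (intro mult_mono) auto
  have B: "0 < k^2 * W^4 * (Z^2) powr \<sigma>" using k W Z by auto
  have "1 / (k^2 * (k^4 + W^4) * (k^2 + Z^2) powr \<sigma>) \<le> 1 / (k^2 * W^4 * (Z^2) powr \<sigma>)"
    by (rule divide_left_mono[OF A]) (use B A in auto)
  also have "\<dots> = (Z powr (-2*\<sigma>) * W powr (-4)) * k powr (-2)"
    using k W Z by (simp add: sq_powr powr_minus field_simps)
  finally show ?thesis .
qed

lemma TB2:
  fixes k W Z \<sigma> :: real
  assumes k: "1 \<le> k" and Z: "0 < Z" and W: "0 < W" and s: "\<sigma> < 0"
  shows "1 / (k^2 * (k^4 + W^4) * (k^2 + Z^2) powr \<sigma>)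
     \<le> 2 powr (-\<sigma>) * ((Z powr (-2*\<sigma>) * W powr (-4)) * k powr (-2))
       + 2 powr (-\<sigma>) * (k powr (-2*\<sigma> - 2) / (k^4 + W^4))"
proof -
  define t where "t = -\<sigma>"
  have t: "0 < t" using s by (simp add: t_def)
  have y: "0 < k^2 + Z^2" using Z by (intro add_nonneg_pos) auto
  have e1: "1 / (k^2 * (k^4 + W^4) * (k^2 + Z^2) powr \<sigma>) = (k^2 + Z^2) powr t / (k^2 * (k^4 + W^4))"
    using y by (simp add: t_def powr_minus field_simps)
  have "(k^2 + Z^2) powr t \<le> (2 * max (k^2) (Z^2)) powr t"
    by (rule powr_mono2) (use t in auto)
  also have "\<dots> = 2 powr t * max (k^2) (Z^2) powr t" by (simp add: powr_mult)
  also have "max (k^2) (Z^2) powr t \<le> k powr (2*t) + Z powr (2*t)"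
    using k Z by (cases "k^2 \<le> Z^2") (auto simp: max_def sq_powr)
  hence "2 powr t * max (k^2) (Z^2) powr t \<le> 2 powr t * (k powr (2*t) + Z powr (2*t))"
    by (intro mult_left_mono) auto
  finally have yb: "(k^2 + Z^2) powr t \<le> 2 powr t * (k powr (2*t) + Z powr (2*t))" .
  have D: "0 < k^2 * (k^4 + W^4)" using k W by (auto intro!: mult_pos_pos add_pos_pos)
  have "(k^2 + Z^2) powr t / (k^2 * (k^4 + W^4)) \<le> 2 powr t * (k powr (2*t) + Z powr (2*t)) / (k^2 * (k^4 + W^4))"
    by (rule divide_right_mono[OF yb]) (use D in auto)
  also have "\<dots> = 2 powr t * (Z powr (2*t) / (k^2 * (k^4 + W^4))) + 2 powr t * (k powr (2*t) / k^2 / (k^4 + W^4))"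
    by (simp add: field_simps add_divide_distrib)
  also have "Z powr (2*t) / (k^2 * (k^4 + W^4)) \<le> Z powr (2*t) / (k^2 * W^4)"
    by (rule divide_left_mono) (use k W in \<open>auto intro!: mult_pos_pos add_pos_pos\<close>)
  also have "Z powr (2*t) / (k^2 * W^4) = (Z powr (-2*\<sigma>) * W powr (-4)) * k powr (-2)"
    using k W by (simp add: t_def powr_minus field_simps)
  also have "k powr (2*t) / k^2 = k powr (-2*\<sigma> - 2)"
    using k by (simp add: t_def powr_diff)
  finally show ?thesis using e1 by (simp add: t_def mult_left_mono)
qed

lemma TB3:
  fixes k W b :: real
  assumes k: "1 \<le> k" and W: "0 < W"
  shows "k powr b / (k^4 + W^4) \<le> k powr (b - 4)"
    "k powr b / (k^4 + W^4) \<le> W powr (-4) * k powr b"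
proof -
  have "k powr b / (k^4 + W^4) \<le> k powr b / k^4"
    by (rule divide_left_mono) (use k W in \<open>auto intro!: mult_pos_pos add_pos_pos\<close>)
  also have "\<dots> = k powr (b - 4)" using k by (simp add: powr_diff)
  finally show "k powr b / (k^4 + W^4) \<le> k powr (b - 4)" .
  have "k powr b / (k^4 + W^4) \<le> k powr b / W^4"
    by (rule divide_left_mono) (use k W in \<open>auto intro!: mult_pos_pos add_pos_pos\<close>)
  also have "\<dots> = W powr (-4) * k powr b" using W by (simp add: powr_minus field_simps)
  finally show "k powr b / (k^4 + W^4) \<le> W powr (-4) * k powr b" .
qed



lemma psum: "r < -1 \<Longrightarrow> summable (\<lambda>n. real (Suc n) powr r)"
  using summable_real_powr_iff[of r] summable_Suc_iff[of "\<lambda>n. real n powr r"] by simp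

lemma hsum:
  fixes \<sigma> :: real
  assumes s1: "-5/2 < \<sigma>" and s2: "\<sigma> < 0" and s3: "\<sigma> \<noteq> -1/2"
  shows "\<exists>D>0. \<forall>W Z. 2 \<le> Z \<longrightarrow> Z \<le> W \<longrightarrow>
     summable (\<lambda>n. real (Suc n) powr (-2*\<sigma> - 2) / (real (Suc n)^4 + W^4)) \<and>
     (\<Sum>n. real (Suc n) powr (-2*\<sigma> - 2) / (real (Suc n)^4 + W^4))
        \<le> D * (Z powr (-2*\<sigma>) * W powr (-4) + W powr (-5 - 2*\<sigma>))"
proof -
  define a where "a = -2*\<sigma> - 2"
  have a1: "a - 4 < -1" using s1 by (simp add: a_def)
  have smb: "summable (\<lambda>n. real (Suc n) powr a / (real (Suc n)^4 + W^4))" if W: "0 < W" for W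
    by (rule summable_comparison_test'[OF psum[OF a1]]) (use TB3(1)[of _ W a] W in auto)
  show ?thesis
  proof (cases "a < -1")
    case True
    define Ka where "Ka = (\<Sum>n. real (Suc n) powr a)"
    have Ka0: "0 \<le> Ka" unfolding Ka_def by (rule suminf_nonneg[OF psum[OF True]]) auto
    show ?thesis
    proof (intro exI[of _ "Ka + 1"] conjI allI impI)
      show "Ka + 1 > 0" using Ka0 by simp
      fix W Z :: real assume Z: "2 \<le> Z" and ZW: "Z \<le> W"
      have W: "0 < W" using Z ZW by simp
      show "summable (\<lambda>n. real (Suc n) powr (-2*\<sigma> - 2) / (real (Suc n)^4 + W^4))"
        using smb[OF W] by (simp add: a_def)
      have "(\<Sum>n. real (Suc n) powr a / (real (Suc n)^4 + W^4)) \<le> (\<Sum>n. W powr (-4) * real (Suc n) powr a)"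
        by (rule suminf_le) (use TB3(2)[of _ W a] W smb[OF W] psum[OF True] in \<open>auto intro: summable_mult\<close>)
      also have "\<dots> = W powr (-4) * Ka" unfolding Ka_def by (rule suminf_mult[OF psum[OF True]])
      also have "\<dots> \<le> (Z powr (-2*\<sigma>) * W powr (-4)) * Ka"
      proof -
        have "1 \<le> Z powr (-2*\<sigma>)" using Z s2 by (intro ge_one_powr_ge_zero) auto
        thus ?thesis using Ka0 by (intro mult_right_mono) (auto simp: mult_le_cancel_right1)
      qed
      also have "\<dots> \<le> (Ka + 1) * (Z powr (-2*\<sigma>) * W powr (-4) + W powr (-5 - 2*\<sigma>))"
      proof -
        have "0 \<le> Z powr (-2*\<sigma>) * W powr (-4)" "0 \<le> W powr (-5 - 2*\<sigma>)" by auto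
        thus ?thesis using Ka0 by (simp add: algebra_simps add_nonneg_nonneg mult_nonneg_nonneg)
      qed
      finally show "(\<Sum>n. real (Suc n) powr (-2*\<sigma> - 2) / (real (Suc n)^4 + W^4))
        \<le> (Ka + 1) * (Z powr (-2*\<sigma>) * W powr (-4) + W powr (-5 - 2*\<sigma>))" by (simp add: a_def)
    qed
  next
    case False
    hence am: "-1 < a" using s3 by (auto simp: a_def)
    have a3: "a < 3" using s1 by (simp add: a_def)
    obtain Ca where Ca: "Ca > 0" "\<And>N::nat. N \<ge> 1 \<Longrightarrow> (\<Sum>n<N. real (Suc n) powr a) \<le> Ca * real N powr (a + 1)"
      using finite_powr_sum[OF am] by blast
    define D where "D = Ca + 2 powr (3 - a) / (3 - a)"
    have D0: "D > 0" using Ca a3 by (simp add: D_def add_pos_nonneg)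
    show ?thesis
    proof (intro exI[of _ D] conjI allI impI)
      show "D > 0" by (rule D0)
      fix W Z :: real assume Z: "2 \<le> Z" and ZW: "Z \<le> W"
      have W2: "2 \<le> W" using Z ZW by simp
      hence W: "0 < W" by simp
      show "summable (\<lambda>n. real (Suc n) powr (-2*\<sigma> - 2) / (real (Suc n)^4 + W^4))"
        using smb[OF W] by (simp add: a_def)
      define h where "h n = real (Suc n) powr a / (real (Suc n)^4 + W^4)" for n
      define N where "N = nat \<lfloor>W\<rfloor>"
      have NW: "real N \<le> W" using W by (simp add: N_def)
      have NW2: "W / 2 \<le> real N" using W2 by (simp add: N_def) linarith
      have N1: "N \<ge> 1" using W2 by (simp add: N_def) linarith
      have Np: "0 < real N" using N1 by simp
      have hs: "summable h" unfolding h_def[abs_def] by (rule smb[OF W])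
      have hsh: "summable (\<lambda>n. h (n + N))" by (rule summable_iff_shift[THEN iffD2, OF hs])
      have split: "suminf h = (\<Sum>n. h (n + N)) + (\<Sum>n<N. h n)"
        by (rule suminf_split_initial_segment[OF hs])
      have "(\<Sum>n<N. h n) \<le> (\<Sum>n<N. W powr (-4) * real (Suc n) powr a)"
        by (rule sum_mono) (use TB3(2)[of _ W a] W in \<open>auto simp: h_def\<close>)
      also have "\<dots> = W powr (-4) * (\<Sum>n<N. real (Suc n) powr a)" by (simp add: sum_distrib_left)
      also have "\<dots> \<le> W powr (-4) * (Ca * real N powr (a + 1))"
        by (rule mult_left_mono[OF Ca(2)[OF N1]]) simp
      also have "\<dots> \<le> W powr (-4) * (Ca * W powr (a + 1))"
        using Ca am NW Np by (intro mult_left_mono powr_mono2) auto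
      also have "\<dots> = Ca * W powr (a - 3)"
        using W by (simp add: powr_add[symmetric])
      finally have fin: "(\<Sum>n<N. h n) \<le> Ca * W powr (a - 3)" .
      have p0: "0 < 3 - a" using a3 by simp
      have tl: "summable (\<lambda>n. real (Suc (n + N)) powr (-(3-a) - 1))"
        "(\<Sum>n. real (Suc (n + N)) powr (-(3-a) - 1)) \<le> real N powr (-(3-a)) / (3-a)"
        using tail_powr_sum[OF p0 N1] by auto
      have "(\<Sum>n. h (n + N)) \<le> (\<Sum>n. real (Suc (n + N)) powr (-(3-a) - 1))"
        by (rule suminf_le[OF _ hsh tl(1)]) (use TB3(1)[of _ W a] W in \<open>auto simp: h_def\<close>)
      also have "\<dots> \<le> real N powr (-(3-a)) / (3-a)" by (rule tl(2))
      also have "real N powr (-(3-a)) \<le> (W/2) powr (-(3-a))"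
        by (rule powr_mono2') (use a3 NW2 W in auto)
      also have "(W/2) powr (-(3-a)) = 2 powr (3 - a) * W powr (a - 3)"
        using W by (simp add: powr_divide powr_minus field_simps powr_add[symmetric])
      finally have tail: "(\<Sum>n. h (n + N)) \<le> 2 powr (3 - a) / (3 - a) * W powr (a - 3)"
        using p0 by (simp add: divide_right_mono)
      have "suminf h \<le> D * W powr (a - 3)"
        using split fin tail by (simp add: D_def algebra_simps)
      also have "\<dots> \<le> D * (Z powr (-2*\<sigma>) * W powr (-4) + W powr (-5 - 2*\<sigma>))"
        using D0 by (intro mult_left_mono) (auto simp: a_def)
      finally show "(\<Sum>n. real (Suc n) powr (-2*\<sigma> - 2) / (real (Suc n)^4 + W^4))
        \<le> D * (Z powr (-2*\<sigma>) * W powr (-4) + W powr (-5 - 2*\<sigma>))" unfolding h_def[abs_def] a_def .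
    qed
  qed
qed



definition fM :: "real \<Rightarrow> real \<Rightarrow> real \<Rightarrow> nat \<Rightarrow> real" where
  "fM \<sigma> W Z n = 1 / (real (Suc n)^2 * (real (Suc n)^4 + W^4) * (real (Suc n)^2 + Z^2) powr \<sigma>)"

lemma fM_nonneg: "0 \<le> W \<Longrightarrow> 0 \<le> fM \<sigma> W Z n"
  unfolding fM_def by auto

lemma upper:
  fixes \<sigma> :: real
  assumes s1: "-5/2 < \<sigma>" and s3: "\<sigma> \<noteq> -1/2"
  shows "\<exists>C>0. \<forall>W Z. 2 \<le> Z \<longrightarrow> Z \<le> W \<longrightarrow> summable (fM \<sigma> W Z) \<and>
     suminf (fM \<sigma> W Z) \<le> C * (Z powr (-2*\<sigma>) * W powr (-4) + W powr (-5 - 2*\<sigma>))"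
proof -
  have s2: "summable (\<lambda>n. real (Suc n) powr (-2))" by (rule psum) simp
  define K2 where "K2 = (\<Sum>n. real (Suc n) powr (-2))"
  have K0: "0 \<le> K2" unfolding K2_def by (rule suminf_nonneg[OF s2]) auto
  show ?thesis
  proof (cases "0 \<le> \<sigma>")
    case True
    show ?thesis
    proof (intro exI[of _ "K2 + 1"] conjI allI impI)
      show "K2 + 1 > 0" using K0 by simp
      fix W Z :: real assume Z: "2 \<le> Z" and ZW: "Z \<le> W"
      define P where "P = Z powr (-2*\<sigma>) * W powr (-4)"
      have le: "fM \<sigma> W Z n \<le> P * real (Suc n) powr (-2)" for n
        unfolding fM_def P_def by (rule TB1) (use Z ZW True in auto)
      have sm2: "summable (\<lambda>n. P * real (Suc n) powr (-2))" by (rule summable_mult[OF s2])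
      show sm: "summable (fM \<sigma> W Z)"
        by (rule summable_comparison_test'[OF sm2]) (use le fM_nonneg Z ZW in auto)
      have "suminf (fM \<sigma> W Z) \<le> (\<Sum>n. P * real (Suc n) powr (-2))"
        by (rule suminf_le[OF le sm sm2])
      also have "\<dots> = P * K2" unfolding K2_def by (rule suminf_mult[OF s2])
      also have "\<dots> \<le> (K2 + 1) * (P + W powr (-5 - 2*\<sigma>))"
      proof -
        have "0 \<le> P" "0 \<le> W powr (-5 - 2*\<sigma>)" by (auto simp: P_def)
        thus ?thesis using K0 by (simp add: algebra_simps add_nonneg_nonneg mult_nonneg_nonneg)
      qed
      finally show "suminf (fM \<sigma> W Z) \<le> (K2 + 1) * (Z powr (-2*\<sigma>) * W powr (-4) + W powr (-5 - 2*\<sigma>))"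
        by (simp add: P_def)
    qed
  next
    case False
    hence sn: "\<sigma> < 0" by simp
    obtain D where D: "D > 0" "\<And>W Z. 2 \<le> Z \<Longrightarrow> Z \<le> W \<Longrightarrow>
     summable (\<lambda>n. real (Suc n) powr (-2*\<sigma> - 2) / (real (Suc n)^4 + W^4)) \<and>
     (\<Sum>n. real (Suc n) powr (-2*\<sigma> - 2) / (real (Suc n)^4 + W^4))
        \<le> D * (Z powr (-2*\<sigma>) * W powr (-4) + W powr (-5 - 2*\<sigma>))"
      using hsum[OF s1 sn s3] by blast
    define c2 where "c2 = 2 powr (-\<sigma>)"
    have c20: "0 < c2" by (simp add: c2_def)
    show ?thesis
    proof (intro exI[of _ "c2 * K2 + c2 * D"] conjI allI impI)
      show "c2 * K2 + c2 * D > 0" using c20 K0 D(1) by (simp add: add_nonneg_pos)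
      fix W Z :: real assume Z: "2 \<le> Z" and ZW: "Z \<le> W"
      define P where "P = Z powr (-2*\<sigma>) * W powr (-4)"
      define Q where "Q = W powr (-5 - 2*\<sigma>)"
      define h where "h n = real (Suc n) powr (-2*\<sigma> - 2) / (real (Suc n)^4 + W^4)" for n
      have hs: "summable h" and hb: "suminf h \<le> D * (P + Q)"
        using D(2)[OF Z ZW] unfolding h_def[abs_def] P_def Q_def by auto
      have le: "fM \<sigma> W Z n \<le> c2 * (P * real (Suc n) powr (-2)) + c2 * h n" for n
        unfolding fM_def P_def h_def c2_def by (rule TB2) (use Z ZW sn in auto)
      have sm2: "summable (\<lambda>n. c2 * (P * real (Suc n) powr (-2)) + c2 * h n)"
        by (intro summable_add summable_mult s2 hs)
      show sm: "summable (fM \<sigma> W Z)"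
        by (rule summable_comparison_test'[OF sm2]) (use le fM_nonneg Z ZW in auto)
      have "suminf (fM \<sigma> W Z) \<le> (\<Sum>n. c2 * (P * real (Suc n) powr (-2)) + c2 * h n)"
        by (rule suminf_le[OF le sm sm2])
      also have "\<dots> = c2 * (P * K2) + c2 * suminf h"
      proof -
        have a1: "summable (\<lambda>n. c2 * (P * real (Suc n) powr (-2)))" by (intro summable_mult s2)
        have a2: "summable (\<lambda>n. c2 * h n)" by (intro summable_mult hs)
        have "(\<Sum>n. c2 * (P * real (Suc n) powr (-2)) + c2 * h n)
           = (\<Sum>n. c2 * (P * real (Suc n) powr (-2))) + (\<Sum>n. c2 * h n)"
          by (rule suminf_add[OF a1 a2, symmetric])
        also have "(\<Sum>n. c2 * (P * real (Suc n) powr (-2))) = c2 * (P * K2)"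
          by (subst suminf_mult[OF summable_mult[OF s2]], subst suminf_mult[OF s2], simp add: K2_def)
        also have "(\<Sum>n. c2 * h n) = c2 * suminf h" by (rule suminf_mult[OF hs])
        finally show ?thesis .
      qed
      also have "\<dots> \<le> c2 * (P * K2) + c2 * (D * (P + Q))"
        using hb c20 by (intro add_left_mono mult_left_mono) auto
      also have "\<dots> \<le> (c2 * K2 + c2 * D) * (P + Q)"
      proof -
        have "0 \<le> P" "0 \<le> Q" by (auto simp: P_def Q_def)
        thus ?thesis using K0 c20 by (simp add: algebra_simps mult_nonneg_nonneg)
      qed
      finally show "suminf (fM \<sigma> W Z) \<le> (c2 * K2 + c2 * D) * (Z powr (-2*\<sigma>) * W powr (-4) + W powr (-5 - 2*\<sigma>))"
        by (simp add: P_def Q_def)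
    qed
  qed
qed



lemma cmp:
  fixes x y M \<sigma> :: real
  assumes "0 < x" "x \<le> y" "y \<le> M * x" "1 \<le> M"
  shows "y powr \<sigma> \<le> M powr \<bar>\<sigma>\<bar> * x powr \<sigma>"
proof (cases "0 \<le> \<sigma>")
  case True
  have "y powr \<sigma> \<le> (M * x) powr \<sigma>" by (rule powr_mono2) (use assms True in auto)
  also have "\<dots> = M powr \<bar>\<sigma>\<bar> * x powr \<sigma>" using True by (simp add: powr_mult)
  finally show ?thesis .
next
  case False
  have "y powr \<sigma> \<le> x powr \<sigma>" by (rule powr_mono2') (use assms False in auto)
  also have "\<dots> \<le> M powr \<bar>\<sigma>\<bar> * x powr \<sigma>"
    using ge_one_powr_ge_zero[of M "\<bar>\<sigma>\<bar>"] assms by (simp add: mult_le_cancel_right1)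
  finally show ?thesis .
qed

lemma lowP:
  fixes W Z \<sigma> :: real
  assumes Z: "2 \<le> Z" and ZW: "Z \<le> W"
  shows "1 / (2 * 2 powr \<bar>\<sigma>\<bar>) * (Z powr (-2*\<sigma>) * W powr (-4)) \<le> fM \<sigma> W Z 0"
proof -
  have W: "0 < W" "0 < Z" using Z ZW by auto
  have y: "(1 + Z^2) powr \<sigma> \<le> 2 powr \<bar>\<sigma>\<bar> * (Z^2) powr \<sigma>"
  proof (rule cmp)
    have "1 \<le> Z^2" using Z by (simp add: one_le_power)
    thus "1 + Z^2 \<le> 2 * Z^2" by simp
  qed (use W in auto)
  have w4: "1 + W^4 \<le> 2 * W^4"
  proof -
    have "1 \<le> W^4" using Z ZW by (simp add: one_le_power)
    thus ?thesis by simp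
  qed
  have z1: "0 < 1 + Z^2" by (simp add: add_pos_nonneg)
  have pos: "0 < (1 + W^4) * (1 + Z^2) powr \<sigma>" using W z1 by (auto intro!: mult_pos_pos add_pos_pos)
  have "(1 + W^4) * (1 + Z^2) powr \<sigma> \<le> (2 * W^4) * (2 powr \<bar>\<sigma>\<bar> * (Z^2) powr \<sigma>)"
    by (rule mult_mono[OF w4 y]) auto
  moreover have pos2: "0 < (2 * W^4) * (2 powr \<bar>\<sigma>\<bar> * (Z^2) powr \<sigma>)" using W by auto
  ultimately have "1 / ((2 * W^4) * (2 powr \<bar>\<sigma>\<bar> * (Z^2) powr \<sigma>)) \<le> 1 / ((1 + W^4) * (1 + Z^2) powr \<sigma>)"
    by (intro divide_left_mono[OF _ _ mult_pos_pos[OF pos2 pos]]) auto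
  moreover have "1 / ((2 * W^4) * (2 powr \<bar>\<sigma>\<bar> * (Z^2) powr \<sigma>))
      = 1 / (2 * 2 powr \<bar>\<sigma>\<bar>) * (Z powr (-2*\<sigma>) * W powr (-4))"
    using W by (simp add: sq_powr powr_minus field_simps)
  moreover have "fM \<sigma> W Z 0 = 1 / ((1 + W^4) * (1 + Z^2) powr \<sigma>)" by (simp add: fM_def)
  ultimately show ?thesis by simp
qed

lemma lowQterm:
  fixes W Z \<sigma> k :: real
  assumes Z: "2 \<le> Z" and ZW: "Z \<le> W" and k1: "W \<le> k" and k2: "k \<le> 3 * W"
  shows "1 / (738 * 10 powr \<bar>\<sigma>\<bar>) * W powr (-6 - 2*\<sigma>) \<le> 1 / (k^2 * (k^4 + W^4) * (k^2 + Z^2) powr \<sigma>)"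
proof -
  have W: "0 < W" using Z ZW by auto
  have kp: "0 < k" using W k1 by simp
  have a: "k^2 \<le> 9 * W^2"
  proof -
    have "k^2 \<le> (3*W)^2" by (rule power_mono) (use k2 kp in auto)
    thus ?thesis by (simp add: power_mult_distrib)
  qed
  have b: "k^4 + W^4 \<le> 82 * W^4"
  proof -
    have "k^4 \<le> (3*W)^4" by (rule power_mono) (use k2 kp in auto)
    thus ?thesis by (simp add: power_mult_distrib)
  qed
  have zz: "Z^2 \<le> W^2" by (rule power_mono) (use ZW Z in auto)
  have ww: "W^2 \<le> k^2" by (rule power_mono) (use k1 W in auto)
  have y: "(k^2 + Z^2) powr \<sigma> \<le> 10 powr \<bar>\<sigma>\<bar> * (W^2) powr \<sigma>"
  proof (rule cmp)
    show "W^2 \<le> k^2 + Z^2" using ww zero_le_power2[of Z] by linarith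
    show "k^2 + Z^2 \<le> 10 * W^2" using zz a by linarith
  qed (use W in auto)
  have pos: "0 < k^2 * (k^4 + W^4) * (k^2 + Z^2) powr \<sigma>"
    using W kp by (auto intro!: mult_pos_pos add_pos_pos)
  have "k^2 * (k^4 + W^4) * (k^2 + Z^2) powr \<sigma> \<le> (9 * W^2) * (82 * W^4) * (10 powr \<bar>\<sigma>\<bar> * (W^2) powr \<sigma>)"
    by (intro mult_mono a b y) (use W kp in auto)
  moreover have pos2: "0 < (9 * W^2) * (82 * W^4) * (10 powr \<bar>\<sigma>\<bar> * (W^2) powr \<sigma>)" using W by auto
  ultimately have "1 / ((9 * W^2) * (82 * W^4) * (10 powr \<bar>\<sigma>\<bar> * (W^2) powr \<sigma>)) \<le> 1 / (k^2 * (k^4 + W^4) * (k^2 + Z^2) powr \<sigma>)"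
    by (intro divide_left_mono[OF _ _ mult_pos_pos[OF pos2 pos]]) auto
  moreover have "1 / ((9 * W^2) * (82 * W^4) * (10 powr \<bar>\<sigma>\<bar> * (W^2) powr \<sigma>))
      = 1 / (738 * 10 powr \<bar>\<sigma>\<bar>) * W powr (-6 - 2*\<sigma>)"
    using W by (simp add: sq_powr powr_minus powr_diff field_simps)
  ultimately show ?thesis by simp
qed

lemma lowQ:
  fixes W Z \<sigma> :: real
  assumes Z: "2 \<le> Z" and ZW: "Z \<le> W" and sm: "summable (fM \<sigma> W Z)"
  shows "1 / (738 * 10 powr \<bar>\<sigma>\<bar>) * W powr (-5 - 2*\<sigma>) \<le> suminf (fM \<sigma> W Z)"
proof -
  have W: "0 < W" "2 \<le> W" using Z ZW by auto
  define N where "N = nat \<lceil>W\<rceil>"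
  have N1: "W \<le> real N" using W by (simp add: N_def)
  have N2: "real N \<le> W + 1" using W by (simp add: N_def)
  define c where "c = 1 / (738 * 10 powr \<bar>\<sigma>\<bar>)"
  have c0: "0 < c" by (simp add: c_def)
  have t: "c * W powr (-6 - 2*\<sigma>) \<le> fM \<sigma> W Z n" if "n \<in> {N..<2*N}" for n
  proof -
    have "W \<le> real (Suc n)" using that N1 by auto
    moreover have "real (Suc n) \<le> 3 * W" using that N2 W by auto
    ultimately show ?thesis unfolding fM_def c_def by (intro lowQterm) (use Z ZW in auto)
  qed
  have "c * W powr (-5 - 2*\<sigma>) = W * (c * W powr (-6 - 2*\<sigma>))"
    using W by (simp add: powr_diff powr_minus field_simps power_eq_if)
  also have "\<dots> \<le> real N * (c * W powr (-6 - 2*\<sigma>))"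
    using N1 c0 by (intro mult_right_mono) auto
  also have "\<dots> = (\<Sum>n\<in>{N..<2*N}. c * W powr (-6 - 2*\<sigma>))" by simp
  also have "\<dots> \<le> (\<Sum>n\<in>{N..<2*N}. fM \<sigma> W Z n)" by (rule sum_mono[OF t])
  also have "\<dots> \<le> suminf (fM \<sigma> W Z)"
    by (rule sum_le_suminf[OF sm]) (use fM_nonneg W in auto)
  finally show ?thesis by (simp add: c_def)
qed



lemma bounds:
  fixes \<sigma> :: real
  assumes s1: "-5/2 < \<sigma>" and s3: "\<sigma> \<noteq> -1/2"
  shows "\<exists>c C. c > 0 \<and> C > 0 \<and> (\<forall>W Z. 2 \<le> Z \<longrightarrow> Z \<le> W \<longrightarrow>
     c * (Z powr (-2*\<sigma>) * W powr (-4)) \<le> suminf (fM \<sigma> W Z) \<and>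
     c * W powr (-5 - 2*\<sigma>) \<le> suminf (fM \<sigma> W Z) \<and>
     suminf (fM \<sigma> W Z) \<le> C * (Z powr (-2*\<sigma>) * W powr (-4) + W powr (-5 - 2*\<sigma>)))"
proof -
  obtain C where C: "C > 0" "\<And>W Z. 2 \<le> Z \<Longrightarrow> Z \<le> W \<Longrightarrow> summable (fM \<sigma> W Z) \<and>
     suminf (fM \<sigma> W Z) \<le> C * (Z powr (-2*\<sigma>) * W powr (-4) + W powr (-5 - 2*\<sigma>))"
    using upper[OF s1 s3] by blast
  define c where "c = min (1 / (2 * 2 powr \<bar>\<sigma>\<bar>)) (1 / (738 * 10 powr \<bar>\<sigma>\<bar>))"
  have c0: "c > 0" by (simp add: c_def)
  show ?thesis
  proof (intro exI conjI allI impI)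
    show "c > 0" "C > 0" by (fact c0, fact C(1))
    fix W Z :: real assume Z: "2 \<le> Z" and ZW: "Z \<le> W"
    have sm: "summable (fM \<sigma> W Z)" using C(2)[OF Z ZW] by blast
    show "suminf (fM \<sigma> W Z) \<le> C * (Z powr (-2*\<sigma>) * W powr (-4) + W powr (-5 - 2*\<sigma>))"
      using C(2)[OF Z ZW] by blast
    have "c * (Z powr (-2*\<sigma>) * W powr (-4)) \<le> 1 / (2 * 2 powr \<bar>\<sigma>\<bar>) * (Z powr (-2*\<sigma>) * W powr (-4))"
      by (rule mult_right_mono) (auto simp: c_def)
    also have "\<dots> \<le> fM \<sigma> W Z 0" by (rule lowP[OF Z ZW])
    also have "\<dots> \<le> suminf (fM \<sigma> W Z)"
      using sum_le_suminf[OF sm, of "{0}"] fM_nonneg[of W] Z ZW by auto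
    finally show "c * (Z powr (-2*\<sigma>) * W powr (-4)) \<le> suminf (fM \<sigma> W Z)" .
    have "c * W powr (-5 - 2*\<sigma>) \<le> 1 / (738 * 10 powr \<bar>\<sigma>\<bar>) * W powr (-5 - 2*\<sigma>)"
      by (rule mult_right_mono) (auto simp: c_def)
    also have "\<dots> \<le> suminf (fM \<sigma> W Z)" by (rule lowQ[OF Z ZW sm])
    finally show "c * W powr (-5 - 2*\<sigma>) \<le> suminf (fM \<sigma> W Z)" .
  qed
qed

lemma powr_le_iff2: "0 < x \<Longrightarrow> 0 < y \<Longrightarrow> 0 < (e::real) \<Longrightarrow> x powr e \<le> y powr e \<longleftrightarrow> x \<le> y"
  by (metis not_le powr_less_mono2 powr_mono2 less_imp_le)

lemma sqrt_ab: "0 \<le> a \<Longrightarrow> c * a \<le> S \<Longrightarrow> 0 \<le> c \<Longrightarrow> sqrt c * sqrt a \<le> sqrt S"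
  by (metis real_sqrt_le_iff real_sqrt_mult)

lemma final_pos:
  fixes \<sigma> :: real
  assumes s1: "-1/2 < \<sigma>" and s2: "\<sigma> < 3/2"
  shows "\<exists>C1 C2. C1 > 0 \<and> C2 > 0 \<and> (\<forall>W Z. 2 \<le> Z \<longrightarrow> Z \<le> W \<longrightarrow>
     C1 * (Z powr (-\<sigma>) / W^2) \<le> sqrt (suminf (fM \<sigma> W Z)) \<and>
     sqrt (suminf (fM \<sigma> W Z)) \<le> C2 * (Z powr (-\<sigma>) / W^2))"
proof -
  obtain c C where cC: "c > 0" "C > 0" "\<And>W Z. 2 \<le> Z \<Longrightarrow> Z \<le> W \<Longrightarrow>
     c * (Z powr (-2*\<sigma>) * W powr (-4)) \<le> suminf (fM \<sigma> W Z) \<and>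
     c * W powr (-5 - 2*\<sigma>) \<le> suminf (fM \<sigma> W Z) \<and>
     suminf (fM \<sigma> W Z) \<le> C * (Z powr (-2*\<sigma>) * W powr (-4) + W powr (-5 - 2*\<sigma>))"
    using bounds[of \<sigma>] s1 by auto
  show ?thesis
  proof (intro exI conjI allI impI)
    show "sqrt c > 0" "sqrt (2*C) > 0" using cC by auto
    fix W Z :: real assume Z: "2 \<le> Z" and ZW: "Z \<le> W"
    have W: "0 < W" "0 < Z" "1 \<le> W" "1 \<le> Z" using Z ZW by auto
    define P where "P = Z powr (-2*\<sigma>) * W powr (-4)"
    define B where "B = Z powr (-\<sigma>) / W^2"
    have B0: "0 \<le> B" by (simp add: B_def)
    have z2: "(Z powr (-\<sigma>))^2 = Z powr (-2*\<sigma>)" by (simp add: power2_eq_square powr_add[symmetric])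
    have w4: "(W^2)^2 = W^4" by simp
    have PB: "P = B^2" unfolding P_def B_def power_divide z2 w4 using W by (simp add: powr_minus divide_inverse)
    have QP: "W powr (-5 - 2*\<sigma>) \<le> P"
    proof -
      have "W powr (-1 - 2*\<sigma>) \<le> Z powr (-2*\<sigma>)"
      proof (cases "0 \<le> \<sigma>")
        case True
        have "W powr (-1 - 2*\<sigma>) \<le> W powr (-2*\<sigma>)" by (rule powr_mono) (use W in auto)
        also have "\<dots> \<le> Z powr (-2*\<sigma>)" by (rule powr_mono2') (use W ZW True in auto)
        finally show ?thesis .
      next
        case False
        have "W powr (-1 - 2*\<sigma>) \<le> 1" using W s1 powr_mono[of "-1 - 2*\<sigma>" 0 W] by auto
        also have "1 \<le> Z powr (-2*\<sigma>)" using W False by (intro ge_one_powr_ge_zero) auto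
        finally show ?thesis .
      qed
      hence "W powr (-1 - 2*\<sigma>) * W powr (-4) \<le> Z powr (-2*\<sigma>) * W powr (-4)"
        by (rule mult_right_mono) simp
      thus ?thesis by (simp add: P_def powr_add[symmetric])
    qed
    have up: "suminf (fM \<sigma> W Z) \<le> (2*C) * P"
    proof -
      have "C * (P + W powr (-5 - 2*\<sigma>)) \<le> C * (P + P)"
        using QP cC(2) by (intro mult_left_mono) auto
      moreover have "suminf (fM \<sigma> W Z) \<le> C * (P + W powr (-5 - 2*\<sigma>))"
        using cC(3)[OF Z ZW] unfolding P_def by blast
      moreover have "C * (P + P) = (2*C) * P" by (simp add: algebra_simps)
      ultimately show ?thesis by linarith
    qed
    have lo: "c * P \<le> suminf (fM \<sigma> W Z)" using cC(3)[OF Z ZW] by (simp add: P_def)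
    have P0: "0 \<le> P" by (simp add: P_def)
    show "sqrt c * (Z powr (-\<sigma>) / W^2) \<le> sqrt (suminf (fM \<sigma> W Z))"
      using sqrt_ab[OF P0 lo] cC(1) PB B0 by (simp add: B_def)
    have "sqrt (suminf (fM \<sigma> W Z)) \<le> sqrt ((2*C) * P)" using up by simp
    also have "\<dots> = sqrt (2*C) * B" using PB B0 by (simp add: real_sqrt_mult)
    finally show "sqrt (suminf (fM \<sigma> W Z)) \<le> sqrt (2*C) * (Z powr (-\<sigma>) / W^2)" by (simp add: B_def)
  qed
qed

lemma final_neg:
  fixes \<sigma> :: real
  assumes s1: "-5/2 < \<sigma>" and s2: "\<sigma> < -1/2"
  shows "\<exists>C1 C2. C1 > 0 \<and> C2 > 0 \<and> (\<forall>W Z. 2 \<le> Z \<longrightarrow> Z \<le> W \<longrightarrow>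
     C1 * (Z powr (-\<sigma>) / W^2 * (if Z \<ge> W powr ((2*\<sigma> + 1) / (2*\<sigma>)) then 1 else 0)
            + W powr (-\<sigma>) / W powr (5/2) * (if Z \<le> W powr ((2*\<sigma> + 1) / (2*\<sigma>)) then 1 else 0))
       \<le> sqrt (suminf (fM \<sigma> W Z)) \<and>
     sqrt (suminf (fM \<sigma> W Z)) \<le> C2 * (Z powr (-\<sigma>) / W^2 * (if Z \<ge> W powr ((2*\<sigma> + 1) / (2*\<sigma>)) then 1 else 0)
            + W powr (-\<sigma>) / W powr (5/2) * (if Z \<le> W powr ((2*\<sigma> + 1) / (2*\<sigma>)) then 1 else 0)))"
proof -
  obtain c C where cC: "c > 0" "C > 0" "\<And>W Z. 2 \<le> Z \<Longrightarrow> Z \<le> W \<Longrightarrow>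
     c * (Z powr (-2*\<sigma>) * W powr (-4)) \<le> suminf (fM \<sigma> W Z) \<and>
     c * W powr (-5 - 2*\<sigma>) \<le> suminf (fM \<sigma> W Z) \<and>
     suminf (fM \<sigma> W Z) \<le> C * (Z powr (-2*\<sigma>) * W powr (-4) + W powr (-5 - 2*\<sigma>))"
    using bounds[of \<sigma>] s1 s2 by auto
  show ?thesis
  proof (intro exI conjI allI impI)
    show "sqrt c / 2 > 0" "sqrt (2*C) > 0" using cC by auto
    fix W Z :: real assume Z: "2 \<le> Z" and ZW: "Z \<le> W"
    have W: "0 < W" "0 < Z" "1 \<le> W" "1 \<le> Z" using Z ZW by auto
    define \<kappa> where "\<kappa> = (2*\<sigma> + 1) / (2*\<sigma>)"
    have kk: "\<kappa> * (-2*\<sigma>) = -1 - 2*\<sigma>"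
    proof -
      have "\<sigma> \<noteq> 0" using s2 by simp
      thus ?thesis by (simp add: \<kappa>_def field_simps)
    qed
    define P where "P = Z powr (-2*\<sigma>) * W powr (-4)"
    define Q where "Q = W powr (-5 - 2*\<sigma>)"
    define b1 where "b1 = Z powr (-\<sigma>) / W^2"
    define b2 where "b2 = W powr (-\<sigma>) / W powr (5/2)"
    have P0: "0 \<le> P" and Q0: "0 \<le> Q" by (auto simp: P_def Q_def)
    have z2: "(Z powr (-\<sigma>))^2 = Z powr (-2*\<sigma>)" by (simp add: power2_eq_square powr_add[symmetric])
    have w4: "(W^2)^2 = W^4" by simp
    have Pb: "P = b1^2" unfolding P_def b1_def power_divide z2 w4 using W by (simp add: powr_minus divide_inverse)
    have b2e: "b2 = W powr (-\<sigma> - 5/2)" unfolding b2_def using W by (simp add: powr_diff)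
    have Qb: "Q = b2^2" unfolding Q_def b2e
      by (simp add: power2_eq_square powr_add[symmetric]) (rule arg_cong[where f="\<lambda>x. W powr x"], simp)
    have b10: "0 \<le> b1" and b20: "0 \<le> b2" by (auto simp: b1_def b2_def)
    have sP: "sqrt P = b1" using Pb b10 by simp
    have sQ: "sqrt Q = b2" using Qb b20 by simp
    have key: "W powr \<kappa> \<le> Z \<longleftrightarrow> Q \<le> P"
    proof -
      have e: "0 < -2*\<sigma>" using s2 by simp
      have "W powr \<kappa> \<le> Z \<longleftrightarrow> (W powr \<kappa>) powr (-2*\<sigma>) \<le> Z powr (-2*\<sigma>)"
        using powr_le_iff2[OF _ _ e, of "W powr \<kappa>" Z] W by simp
      also have "(W powr \<kappa>) powr (-2*\<sigma>) = W powr (-1 - 2*\<sigma>)"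
        by (simp only: powr_powr kk)
      also have "W powr (-1 - 2*\<sigma>) \<le> Z powr (-2*\<sigma>) \<longleftrightarrow> W powr (-1 - 2*\<sigma>) * W powr (-4) \<le> Z powr (-2*\<sigma>) * W powr (-4)"
        using W by (simp add: mult_le_cancel_right)
      also have "W powr (-1 - 2*\<sigma>) * W powr (-4) = Q" by (simp add: Q_def powr_add[symmetric])
      finally show ?thesis by (simp add: P_def)
    qed
    define B where "B = b1 * (if Z \<ge> W powr \<kappa> then 1 else 0) + b2 * (if Z \<le> W powr \<kappa> then 1 else 0)"
    define m where "m = max P Q"
    have m0: "0 \<le> m" using P0 by (simp add: m_def)
    have Bl: "sqrt m \<le> B" and Bu: "B \<le> 2 * sqrt m"
    proof -
      have "sqrt m = max b1 b2" unfolding m_def sP[symmetric] sQ[symmetric] by (simp add: max_def)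
      moreover have "Z \<le> W powr \<kappa> \<longleftrightarrow> P \<le> Q"
      proof -
        have "W powr \<kappa> \<le> Z \<and> Z \<le> W powr \<kappa> \<longleftrightarrow> Z = W powr \<kappa>" by auto
        show ?thesis
        proof
          assume "Z \<le> W powr \<kappa>"
          show "P \<le> Q"
          proof (rule ccontr)
            assume "\<not> P \<le> Q"
            hence "Q < P" by simp
            hence "Q < P" .
            have "Z powr (-2*\<sigma>) * W powr (-4) \<le> W powr (-5 - 2*\<sigma>)"
            proof -
              have "Z powr (-2*\<sigma>) \<le> (W powr \<kappa>) powr (-2*\<sigma>)"
                by (rule powr_mono2) (use \<open>Z \<le> W powr \<kappa>\<close> s2 W in auto)
              also have "(W powr \<kappa>) powr (-2*\<sigma>) = W powr (-1 - 2*\<sigma>)"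
                by (simp only: powr_powr kk)
              finally have "Z powr (-2*\<sigma>) * W powr (-4) \<le> W powr (-1 - 2*\<sigma>) * W powr (-4)"
                by (rule mult_right_mono) simp
              thus ?thesis by (simp add: powr_add[symmetric])
            qed
            with \<open>Q < P\<close> show False by (simp add: P_def Q_def)
          qed
        next
          assume "P \<le> Q"
          show "Z \<le> W powr \<kappa>"
          proof (rule ccontr)
            assume "\<not> Z \<le> W powr \<kappa>"
            hence lt: "W powr \<kappa> < Z" by simp
            have "W powr (-1 - 2*\<sigma>) < Z powr (-2*\<sigma>)"
            proof -
              have "(W powr \<kappa>) powr (-2*\<sigma>) < Z powr (-2*\<sigma>)"
                by (rule powr_less_mono2) (use lt s2 in auto)
              also have "(W powr \<kappa>) powr (-2*\<sigma>) = W powr (-1 - 2*\<sigma>)"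
                by (simp only: powr_powr kk)
              finally show ?thesis .
            qed
            hence "W powr (-1 - 2*\<sigma>) * W powr (-4) < Z powr (-2*\<sigma>) * W powr (-4)"
              using W by (intro mult_strict_right_mono) auto
            hence "Q < P" by (simp add: P_def Q_def powr_add[symmetric])
            with \<open>P \<le> Q\<close> show False by simp
          qed
        qed
      qed
      moreover have "P \<le> Q \<longleftrightarrow> b1 \<le> b2" "Q \<le> P \<longleftrightarrow> b2 \<le> b1"
        using sP sQ real_sqrt_le_iff by metis+
      ultimately have i1: "(W powr \<kappa> \<le> Z) = (b2 \<le> b1)" and i2: "(Z \<le> W powr \<kappa>) = (b1 \<le> b2)"
        and sm: "sqrt m = max b1 b2" using key by auto
      show "sqrt m \<le> B" "B \<le> 2 * sqrt m"
        unfolding B_def sm i1 i2 using b10 b20 by (auto simp: max_def)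
    qed
    have S_lo: "c * m \<le> suminf (fM \<sigma> W Z)" using cC(3)[OF Z ZW] by (auto simp: m_def P_def Q_def max_def)
    have S_up: "suminf (fM \<sigma> W Z) \<le> (2*C) * m"
    proof -
      have "C * (P + Q) \<le> C * (m + m)" using cC(2) by (intro mult_left_mono) (auto simp: m_def)
      moreover have "suminf (fM \<sigma> W Z) \<le> C * (P + Q)" using cC(3)[OF Z ZW] unfolding P_def Q_def by blast
      moreover have "C * (m + m) = (2*C) * m" by (simp add: algebra_simps)
      ultimately show ?thesis by linarith
    qed
    have "sqrt c / 2 * B \<le> sqrt c * sqrt m" using Bu cC(1) by (simp add: field_simps)
    also have "\<dots> \<le> sqrt (suminf (fM \<sigma> W Z))" by (rule sqrt_ab[OF m0 S_lo]) (use cC in auto)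
    finally show "sqrt c / 2 * (Z powr (-\<sigma>) / W^2 * (if Z \<ge> W powr ((2*\<sigma> + 1) / (2*\<sigma>)) then 1 else 0)
            + W powr (-\<sigma>) / W powr (5/2) * (if Z \<le> W powr ((2*\<sigma> + 1) / (2*\<sigma>)) then 1 else 0))
       \<le> sqrt (suminf (fM \<sigma> W Z))" by (simp add: B_def b1_def b2_def \<kappa>_def)
    have "sqrt (suminf (fM \<sigma> W Z)) \<le> sqrt ((2*C) * m)" using S_up by simp
    also have "\<dots> = sqrt (2*C) * sqrt m" by (simp add: real_sqrt_mult)
    also have "\<dots> \<le> sqrt (2*C) * B" using Bl cC(2) by (intro mult_left_mono) auto
    finally show "sqrt (suminf (fM \<sigma> W Z)) \<le> sqrt (2*C) * (Z powr (-\<sigma>) / W^2 * (if Z \<ge> W powr ((2*\<sigma> + 1) / (2*\<sigma>)) then 1 else 0)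
            + W powr (-\<sigma>) / W powr (5/2) * (if Z \<le> W powr ((2*\<sigma> + 1) / (2*\<sigma>)) then 1 else 0))"
      by (simp add: B_def b1_def b2_def \<kappa>_def)
  qed
qed



lemma jz2: "\<zeta> \<noteq> (0,0) \<Longrightarrow> 2 \<le> jzeta \<zeta>"
proof -
  assume h: "\<zeta> \<noteq> (0,0)"
  obtain a b where ab: "\<zeta> = (a, b)" by (cases \<zeta>)
  have "0 < a^2 + b^2" using h ab sum_power2_gt_zero_iff[of a b] by auto
  hence "1 \<le> a^2 + b^2" by simp
  hence "1 \<le> real_of_int (a^2 + b^2)" by linarith
  hence "1 \<le> real_of_int a ^ 2 + real_of_int b ^ 2" by simp
  hence "1 \<le> sqrt (real_of_int a ^ 2 + real_of_int b ^ 2)" by simp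
  thus ?thesis by (simp add: jzeta_def ab)
qed

lemma jzw: "jzeta \<zeta> \<le> jomega l \<zeta>"
proof -
  have "0 \<le> jzeta \<zeta>" by (simp add: jzeta_def)
  hence "jzeta \<zeta> = sqrt ((jzeta \<zeta>)^2)" by simp
  also have "\<dots> \<le> sqrt (cmod l + (jzeta \<zeta>)^2)" by (rule real_sqrt_le_mono) simp
  finally show ?thesis by (simp add: jomega_def)
qed

lemma Ms: "Msig \<sigma> l \<zeta> = sqrt (suminf (fM \<sigma> (jomega l \<zeta>) (jzeta \<zeta>)))"
  unfolding Msig_def fM_def ..

theorem lemma9:
  fixes a \<nu> \<delta>1 \<delta>2 \<sigma> :: real and VP :: "complex set"
  assumes "a > 0" and "\<nu> > 0"
    and "\<delta>1 > 0" and "sectorS \<delta>1 \<delta>2 \<inter> VP = {}"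
    and "\<delta>2 < min (\<nu> * pi^2 / (2 * a^2)) (\<nu> / 2)"
    and "-5/2 < \<sigma>" and "\<sigma> < 3/2" and "\<sigma> \<noteq> -1/2"
  shows "(\<sigma> > -1/2 \<longrightarrow>
            comparable_on (sectorS \<delta>1 \<delta>2) (Msig \<sigma>)
              (\<lambda>l \<zeta>. jzeta \<zeta> powr (-\<sigma>) / (jomega l \<zeta>)^2))
       \<and> (\<sigma> < -1/2 \<longrightarrow>
            (let \<kappa> = (2*\<sigma> + 1) / (2*\<sigma>) in
             comparable_on (sectorS \<delta>1 \<delta>2) (Msig \<sigma>)
              (\<lambda>l \<zeta>. jzeta \<zeta> powr (-\<sigma>) / (jomega l \<zeta>)^2
                        * (if jzeta \<zeta> \<ge> jomega l \<zeta> powr \<kappa> then 1 else 0)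
                     + jomega l \<zeta> powr (-\<sigma>) / jomega l \<zeta> powr (5/2)
                        * (if jzeta \<zeta> \<le> jomega l \<zeta> powr \<kappa> then 1 else 0))))"
proof (intro conjI impI)
  assume s: "\<sigma> > -1/2"
  obtain C1 C2 where C: "C1 > 0" "C2 > 0" "\<And>W Z. 2 \<le> Z \<Longrightarrow> Z \<le> W \<Longrightarrow>
     C1 * (Z powr (-\<sigma>) / W^2) \<le> sqrt (suminf (fM \<sigma> W Z)) \<and>
     sqrt (suminf (fM \<sigma> W Z)) \<le> C2 * (Z powr (-\<sigma>) / W^2)"
    using final_pos[OF s assms(7)] by blast
  show "comparable_on (sectorS \<delta>1 \<delta>2) (Msig \<sigma>) (\<lambda>l \<zeta>. jzeta \<zeta> powr (-\<sigma>) / (jomega l \<zeta>)^2)"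
    unfolding comparable_on_def
    by (rule exI[of _ C1], rule exI[of _ C2]) (use C jz2 jzw in \<open>auto simp: Ms\<close>)
next
  assume s: "\<sigma> < -1/2"
  obtain C1 C2 where C: "C1 > 0" "C2 > 0" "\<And>W Z. 2 \<le> Z \<Longrightarrow> Z \<le> W \<Longrightarrow>
     C1 * (Z powr (-\<sigma>) / W^2 * (if Z \<ge> W powr ((2*\<sigma> + 1) / (2*\<sigma>)) then 1 else 0)
            + W powr (-\<sigma>) / W powr (5/2) * (if Z \<le> W powr ((2*\<sigma> + 1) / (2*\<sigma>)) then 1 else 0))
       \<le> sqrt (suminf (fM \<sigma> W Z)) \<and>
     sqrt (suminf (fM \<sigma> W Z)) \<le> C2 * (Z powr (-\<sigma>) / W^2 * (if Z \<ge> W powr ((2*\<sigma> + 1) / (2*\<sigma>)) then 1 else 0)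
            + W powr (-\<sigma>) / W powr (5/2) * (if Z \<le> W powr ((2*\<sigma> + 1) / (2*\<sigma>)) then 1 else 0))"
    using final_neg[OF assms(6) s] by blast
  show "let \<kappa> = (2*\<sigma> + 1) / (2*\<sigma>) in
             comparable_on (sectorS \<delta>1 \<delta>2) (Msig \<sigma>)
              (\<lambda>l \<zeta>. jzeta \<zeta> powr (-\<sigma>) / (jomega l \<zeta>)^2
                        * (if jzeta \<zeta> \<ge> jomega l \<zeta> powr \<kappa> then 1 else 0)
                     + jomega l \<zeta> powr (-\<sigma>) / jomega l \<zeta> powr (5/2)
                        * (if jzeta \<zeta> \<le> jomega l \<zeta> powr \<kappa> then 1 else 0))"
    unfolding Let_def comparable_on_def
  proof (rule exI[of _ C1], rule exI[of _ C2], intro conjI ballI allI impI)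
    show "C1 > 0" "C2 > 0" by (fact C(1), fact C(2))
    fix l :: complex and \<zeta> :: "int \<times> int" assume "\<zeta> \<noteq> (0,0)"
    hence h: "2 \<le> jzeta \<zeta>" "jzeta \<zeta> \<le> jomega l \<zeta>" using jz2 jzw by auto
    show "C1 * (jzeta \<zeta> powr (-\<sigma>) / (jomega l \<zeta>)^2
                        * (if jzeta \<zeta> \<ge> jomega l \<zeta> powr ((2*\<sigma> + 1) / (2*\<sigma>)) then 1 else 0)
                     + jomega l \<zeta> powr (-\<sigma>) / jomega l \<zeta> powr (5/2)
                        * (if jzeta \<zeta> \<le> jomega l \<zeta> powr ((2*\<sigma> + 1) / (2*\<sigma>)) then 1 else 0)) \<le> Msig \<sigma> l \<zeta>"
      using C(3)[OF h] by (simp only: Ms)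
    show "Msig \<sigma> l \<zeta> \<le> C2 * (jzeta \<zeta> powr (-\<sigma>) / (jomega l \<zeta>)^2
                        * (if jzeta \<zeta> \<ge> jomega l \<zeta> powr ((2*\<sigma> + 1) / (2*\<sigma>)) then 1 else 0)
                     + jomega l \<zeta> powr (-\<sigma>) / jomega l \<zeta> powr (5/2)
                        * (if jzeta \<zeta> \<le> jomega l \<zeta> powr ((2*\<sigma> + 1) / (2*\<sigma>)) then 1 else 0))"
      using C(3)[OF h] by (simp only: Ms)
  qed
qed


end
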